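(* For each $j\geq 1$ and $\tau=\tau_j$, the topological zeta function is the polynomial reciprocal $$1/\zeta (\tau_j, z) = (1-z) \prod_{n=0}^{j} (1-z^{2^n}),$$ whose zeroes all lie on the unit circle $|z|=1$; moreover $\zeta(\tau_j,z)\to\zeta(\tau_\infty,z)$ as $j\to\infty$, where $1/\zeta (\tau_\infty, z) = (1-z) \prod_{n=0}^{\infty} (1-z^{2^n})$.
   Context: For a sequence $s=s_1s_2s_3\dots$ of $0$'s and $1$'s, set $\tau(s)=0.t_1t_2t_3\dots=\sum_{k\geq1}t_k2^{-k}$ with $t_k=\sum_{i=1}^k s_i \pmod 2$. Define kneading sequences $K_1=\overline{1}$, $K_2=\overline{10}$, $K_3=\overline{1011}$, and in general $K_{j+1}$ is obtained from $K_j$ by duplicating the repeating block and reversing its last symbol (equivalently applying the Feigenbaum substitution $1\to10$, $0\to11$ to the repeating block); $K_j$ has period $2^j$ and is the kneading sequence of a unimodal map with a periodic attractor of period $2^j$, and $K_\infty=\lim_j K_j$. Set $\tau_j=\tau(K_j)$ (so $\tau_1=2/3$, $\tau_2=4/5$, $\tau_3=14/17,\dots$) and $\tau_\infty=\lim_j\tau_j=\tau(K_\infty)$. For a unimodal map $f$ with parameter $\tau$, the topological (Artin–Mazur) zeta function is $\zeta(\tau,z)=\exp\sum_{n\geq1}\frac{z^n}{n}\#\mathrm{Per}_n(f)$, which depends only on $\tau$; by Milnor–Thurston, if $\tau=0.\overline{t_1\dots t_n}$ has periodic kneading sequence then $\zeta(\tau,z)=1/\big((1-z)(1+\sum_{k=1}^{n-1}\epsilon_k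 z^k)\big)$ with $\epsilon_k=1-2t_k$, and otherwise $\zeta(\tau,z)=1/\big((1-z)(1+\sum_{k\geq1}\epsilon_k z^k)\big)$. *)

theory Defs
  imports "HOL-Analysis.Analysis"
begin

text \<open>Symbols are 0/1 natural numbers.  Sequences s = s_1 s_2 ... are functions
  nat \<Rightarrow> nat, only the values at indices k \<ge> 1 being relevant.\<close>

definition feig :: "nat list \<Rightarrow> nat list" where
  "feig xs = concat (map (\<lambda>b. if b = 1 then [1, 0] else [1, 1]) xs)"

definition kblock :: "nat \<Rightarrow> nat list" where
  "kblock j = (feig ^^ j) [1]"

definition K :: "nat \<Rightarrow> nat \<Rightarrow> nat" where
  "K j k = kblock j ! ((k - 1) mod length (kblock j))"

definition Kinf :: "nat \<Rightarrow> nat" where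
  "Kinf k = (THE b. eventually (\<lambda>j. K j k = b) sequentially)"

definition tseq :: "(nat \<Rightarrow> nat) \<Rightarrow> nat \<Rightarrow> nat" where
  "tseq s k = (\<Sum>i=1..k. s i) mod 2"

definition tau :: "(nat \<Rightarrow> nat) \<Rightarrow> real" where
  "tau s = (\<Sum>k. real (tseq s (Suc k)) / 2 ^ Suc k)"

definition eps :: "(nat \<Rightarrow> nat) \<Rightarrow> nat \<Rightarrow> complex" where
  "eps s k = 1 - 2 * of_nat (tseq s k)"

definition tperiodic :: "(nat \<Rightarrow> nat) \<Rightarrow> nat \<Rightarrow> bool" where
  "tperiodic s n \<longleftrightarrow> n > 0 \<and> (\<forall>k\<ge>1. tseq s (k + n) = tseq s k)"

text \<open>Milnor--Thurston formula for the topological zeta function, as a function of the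
  kneading sequence (equivalently of \<tau>); n is the (minimal) period in the periodic case.\<close>
definition zeta :: "(nat \<Rightarrow> nat) \<Rightarrow> complex \<Rightarrow> complex" where
  "zeta s z =
     (if \<exists>n. tperiodic s n then
        (let n = (LEAST n. tperiodic s n) in
          1 / ((1 - z) * (1 + (\<Sum>k=1..n-1. eps s k * z ^ k))))
      else 1 / ((1 - z) * (1 + (\<Sum>k. eps s (Suc k) * z ^ Suc k))))"

end

theory Submission
  imports Defs
begin


lemma feig_simps[simp]: "feig [] = []" "feig (x#xs) = (if x = 1 then [1,0] else [1,1]) @ feig xs"
  by (simp_all add: feig_def)

lemma feig_append[simp]: "feig (xs @ ys) = feig xs @ feig ys"
  by (simp add: feig_def)

lemma length_feig[simp]: "length (feig xs) = 2 * length xs"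
  by (induction xs) auto

lemma feig_nth_even: "i < length xs \<Longrightarrow> feig xs ! (2*i) = 1"
proof (induction xs arbitrary: i)
  case (Cons x xs)
  show ?case
  proof (cases i)
    case 0 then show ?thesis by simp
  next
    case (Suc i')
    then have "i' < length xs" using Cons.prems by simp
    moreover have "feig (x # xs) ! (2*i) = feig xs ! (2*i')"
      using Suc by (simp add: nth_append)
    ultimately show ?thesis using Cons.IH Suc by simp
  qed
qed simp

lemma feig_nth_odd: "i < length xs \<Longrightarrow> feig xs ! (2*i+1) = (if xs ! i = 1 then 0 else 1)"
proof (induction xs arbitrary: i)
  case (Cons x xs)
  show ?case
  proof (cases i)
    case 0 then show ?thesis by simp
  next
    case (Suc i')
    then have "i' < length xs" using Cons.prems by simp
    moreover have "feig (x # xs) ! (2*i+1) = feig xs ! (2*i'+1)"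
      using Suc by (simp add: nth_append)
    ultimately show ?thesis using Cons.IH Suc by simp
  qed
qed simp

lemma feig_01: "set xs \<subseteq> {0,1} \<Longrightarrow> set (feig xs) \<subseteq> {0,1}"
  by (induction xs) auto

lemma feig_sum: "set xs \<subseteq> {0,1} \<Longrightarrow> sum_list (feig xs) mod 2 = sum_list xs mod 2"
proof (induction xs)
  case Nil show ?case by simp
next
  case (Cons x xs)
  have x: "x = 0 \<or> x = 1" using Cons.prems by simp
  have IH: "sum_list (feig xs) mod 2 = sum_list xs mod 2" using Cons.prems Cons.IH by simp
  have e: "sum_list (feig (x # xs)) = (if x = 1 then 1 else 2) + sum_list (feig xs)"
    by simp
  from x show ?case
  proof
    assume x0: "x = 0"
    have "sum_list (feig (x # xs)) = 2 + sum_list (feig xs)" using e x0 by simp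
    then show ?thesis using IH x0 by simp
  next
    assume x1: "x = 1"
    have "sum_list (feig (x # xs)) = Suc (sum_list (feig xs))" using e x1 by simp
    moreover have "sum_list (x # xs) = Suc (sum_list xs)" using x1 by simp
    ultimately show ?thesis using IH by (metis mod_Suc_eq)
  qed
qed

lemma kblock_Suc: "kblock (Suc j) = feig (kblock j)"
  by (simp add: kblock_def)

lemma length_kblock[simp]: "length (kblock j) = 2 ^ j"
  by (induction j) (auto simp: kblock_Suc, simp add: kblock_def)

lemma kblock_01: "set (kblock j) \<subseteq> {0,1}"
proof (induction j)
  case 0 then show ?case by (simp add: kblock_def)
next
  case (Suc j) then show ?case unfolding kblock_Suc by (rule feig_01)
qed

lemma kblock_sum: "sum_list (kblock j) mod 2 = 1"
proof (induction j)
  case 0 then show ?case by (simp add: kblock_def)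
next
  case (Suc j) then show ?case unfolding kblock_Suc using feig_sum[OF kblock_01[of j]] by simp
qed


lemma funpow_feig_append: "(feig ^^ j) (xs @ ys) = (feig ^^ j) xs @ (feig ^^ j) ys"
  by (induction j) auto

lemma length_funpow_feig[simp]: "length ((feig ^^ j) xs) = 2 ^ j * length xs"
  by (induction j) auto

lemma feig_agree:
  assumes "length xs = length ys" "\<forall>i. i + 1 < length xs \<longrightarrow> xs ! i = ys ! i"
  shows "\<forall>i. i + 1 < length (feig xs) \<longrightarrow> feig xs ! i = feig ys ! i"
proof (intro allI impI)
  fix i assume i: "i + 1 < length (feig xs)"
  obtain q where "i = 2*q \<or> i = 2*q+1" by (metis dvd_mult_div_cancel odd_two_times_div_two_succ)
  then show "feig xs ! i = feig ys ! i"
  proof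
    assume "i = 2*q" then show ?thesis using i assms by (simp add: feig_nth_even)
  next
    assume h: "i = 2*q+1"
    then have "q + 1 < length xs" using i by simp
    then show ?thesis using h assms feig_nth_odd[of q xs] feig_nth_odd[of q ys] by simp
  qed
qed

lemma funpow_feig_agree: "\<forall>i. i + 1 < 2^j \<longrightarrow> (feig ^^ j) [0] ! i = (feig ^^ j) [1] ! i"
proof (induction j)
  case 0 then show ?case by simp
next
  case (Suc j)
  have "\<forall>i. i + 1 < length (feig ((feig ^^ j) [0])) \<longrightarrow> feig ((feig ^^ j) [0]) ! i = feig ((feig ^^ j) [1]) ! i"
    by (rule feig_agree) (use Suc in auto)
  then show ?case by simp
qed

lemma kblock_Suc_nth: "i + 1 < 2^(Suc j) \<Longrightarrow> kblock (Suc j) ! i = kblock j ! (i mod 2^j)"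
proof -
  assume i: "i + 1 < 2^(Suc j)"
  have "kblock (Suc j) = (feig ^^ j) (feig [1])" unfolding kblock_def by (simp add: funpow_Suc_right del: funpow.simps)
  also have "feig [1] = [1] @ [0]" by simp
  finally have e: "kblock (Suc j) = kblock j @ (feig ^^ j) [0]"
    using funpow_feig_append[of j "[1]" "[0]"] by (simp add: kblock_def)
  show ?thesis
  proof (cases "i < 2^j")
    case True then show ?thesis by (simp add: e nth_append)
  next
    case False
    then have "i mod 2^j = i - 2^j" using i by (simp add: le_mod_geq)
    moreover have "i - 2^j + 1 < 2^j" using i False by simp
    moreover have "kblock (Suc j) ! i = (feig ^^ j) [0] ! (i - 2^j)"
      using False by (simp add: e nth_append)
    ultimately show ?thesis using funpow_feig_agree[of j] by (simp add: kblock_def)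
  qed
qed

lemma K_Suc: "1 \<le> k \<Longrightarrow> k < 2^(Suc j) \<Longrightarrow> K (Suc j) k = K j k"
  unfolding K_def by (simp add: kblock_Suc_nth)

lemma K_period: "1 \<le> k \<Longrightarrow> K j (k + 2^j) = K j k"
proof -
  assume k: "1 \<le> k"
  have "k + 2^j - 1 = (k - 1) + 2^j" using k by simp
  then show ?thesis unfolding K_def by (simp only: mod_add_self2 length_kblock)
qed

lemma K_01: "K j k \<in> {0,1}"
  unfolding K_def using kblock_01[of j] by (simp add: subset_iff)

lemma K_block_sum: "(\<Sum>i=1..2^j. K j i) mod 2 = 1"
proof -
  have "(\<Sum>i=1..2^j. K j i) = (\<Sum>i<2^j. K j (Suc i))"
    by (simp add: sum.atLeast1_atMost_eq)
  also have "\<dots> = (\<Sum>i<2^j. kblock j ! i)" by (intro sum.cong) (auto simp: K_def)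
  also have "\<dots> = sum_list (kblock j)" by (simp add: sum_list_sum_nth atLeast0LessThan)
  finally show ?thesis using kblock_sum by simp
qed


lemma tseq_0[simp]: "tseq s 0 = 0" by (simp add: tseq_def)

lemma tseq_Suc: "tseq s (Suc k) = (tseq s k + s (Suc k)) mod 2"
  by (simp add: tseq_def mod_add_left_eq)

lemma tseq_le1: "tseq s k \<le> 1" by (simp add: tseq_def)

lemma tseq_anti: "tseq (K j) (k + 2^j) = (1 + tseq (K j) k) mod 2"
proof (induction k)
  case 0 then show ?case using K_block_sum by (simp add: tseq_def)
next
  case (Suc k)
  have "tseq (K j) (Suc k + 2^j) = (tseq (K j) (k + 2^j) + K j (Suc k + 2^j)) mod 2"
    using tseq_Suc[of "K j" "k + 2^j"] by simp
  also have "K j (Suc k + 2^j) = K j (Suc k)" by (rule K_period) simp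
  finally show ?case using Suc tseq_Suc[of "K j" k] by (simp add: mod_add_left_eq add.assoc) (metis mod_Suc_eq)
qed

lemma tseq_period: "tseq (K j) (k + 2^Suc j) = tseq (K j) k"
proof -
  have "tseq (K j) (k + 2^Suc j) = tseq (K j) ((k + 2^j) + 2^j)" by (simp add: add.assoc mult_2)
  also have "\<dots> = tseq (K j) k" using tseq_le1[of "K j" k] by (simp add: tseq_anti mod_add_right_eq) (cases "tseq (K j) k"; simp)
  finally show ?thesis .
qed

lemma tseq_K_Suc: "k < 2^Suc j \<Longrightarrow> tseq (K (Suc j)) k = tseq (K j) k"
  unfolding tseq_def by (intro arg_cong[where f="\<lambda>x. x mod 2"] sum.cong) (auto intro!: K_Suc)

lemma eps_anti: "eps (K j) (k + 2^j) = - eps (K j) k"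
  using tseq_le1[of "K j" k] by (cases "tseq (K j) k") (auto simp: eps_def tseq_anti)

lemma poly_K: "(\<Sum>k<2^Suc j. eps (K j) k * z^k) = (\<Prod>n\<le>j. 1 - z^(2^n))"
proof (induction j)
  case 0
  have "K 0 = (\<lambda>_. 1)" by (auto simp: K_def kblock_def)
  then have "tseq (K 0) 1 = 1" by (simp add: tseq_def)
  then show ?case by (simp add: eps_def numeral_2_eq_2)
next
  case (Suc j)
  define M :: nat where "M = 2^Suc j"
  define f where "f k = eps (K (Suc j)) k * z^k" for k
  have "(\<Sum>k<2^Suc (Suc j). f k) = (\<Sum>k\<in>{0..<M}. f k) + (\<Sum>k\<in>{M..<M+M}. f k)"
    unfolding M_def by (simp add: lessThan_atLeast0 sum.atLeastLessThan_concat mult_2)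
  also have "(\<Sum>k\<in>{M..<M+M}. f k) = (\<Sum>k\<in>{0..<M}. f (k + M))"
    using sum.shift_bounds_nat_ivl[of f 0 M M] by simp
  also have "\<dots> = (\<Sum>k\<in>{0..<M}. (- (z^M)) * f k)"
    unfolding f_def M_def by (intro sum.cong refl) (simp add: eps_anti[of "Suc j", simplified] power_add)
  finally have A: "(\<Sum>k<2^Suc (Suc j). f k) = (\<Sum>k\<in>{0..<M}. f k) + (- (z^M)) * (\<Sum>k\<in>{0..<M}. f k)"
    by (simp only: sum_distrib_left)
  have B: "(\<Sum>k\<in>{0..<M}. f k) = (\<Sum>k<2^Suc j. eps (K j) k * z^k)"
    unfolding f_def M_def by (intro sum.cong) (auto simp: eps_def tseq_K_Suc)
  have "(\<Sum>k<2^Suc (Suc j). f k) = (\<Prod>n\<le>j. 1 - z^(2^n)) * (1 - z^M)"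
    unfolding A B Suc by (simp add: algebra_simps)
  then show ?case unfolding f_def M_def by simp
qed


definition per :: "(nat \<Rightarrow> nat) \<Rightarrow> nat \<Rightarrow> bool" where
  "per f n \<longleftrightarrow> (\<forall>k\<ge>1. f (k + n) = f k)"

lemma per_mult: "per f n \<Longrightarrow> per f (q * n)"
proof (induction q)
  case 0 then show ?case by (simp add: per_def)
next
  case (Suc q)
  show ?case unfolding per_def
  proof (intro allI impI)
    fix k :: nat assume k: "k \<ge> 1"
    have "f (k + Suc q * n) = f ((k + q * n) + n)" by (simp add: algebra_simps)
    also have "\<dots> = f (k + q * n)" using Suc.prems k unfolding per_def by simp
    also have "\<dots> = f k" using Suc k unfolding per_def by simp
    finally show "f (k + Suc q * n) = f k" .
  qed
qed

lemma per_mod: "per f n \<Longrightarrow> per f m \<Longrightarrow> per f (m mod n)"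
proof -
  assume n: "per f n" and m: "per f m"
  have nq: "\<forall>k\<ge>1. f (k + (m div n) * n) = f k" using per_mult[OF n, of "m div n"] unfolding per_def .
  have mm: "\<forall>k\<ge>1. f (k + m) = f k" using m unfolding per_def .
  show ?thesis unfolding per_def
  proof (intro allI impI)
    fix k :: nat assume k: "k \<ge> 1"
    have "f (k + m mod n) = f ((k + m mod n) + (m div n) * n)" using nq[rule_format, of "k + m mod n"] k by simp
    also have "(k + m mod n) + (m div n) * n = k + m" by simp
    also have "f (k + m) = f k" using mm k by simp
    finally show "f (k + m mod n) = f k" .
  qed
qed

lemma per_gcd: "per f m \<Longrightarrow> per f n \<Longrightarrow> per f (gcd m n)"
proof (induction m n rule: gcd_nat_induct)
  fix m assume "per f m" "per f 0" then show "per f (gcd m 0)" by simp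
next
  fix m n :: nat
  assume "0 < n" and IH: "per f n \<Longrightarrow> per f (m mod n) \<Longrightarrow> per f (gcd n (m mod n))"
    and "per f m" "per f n"
  then show "per f (gcd m n)" by (metis gcd_red_nat per_mod)
qed

lemma tperiodic_K: "tperiodic (K j) (2^Suc j)"
  unfolding tperiodic_def using tseq_period[of j] by simp

lemma not_tperiodic_K: assumes "0 < n" "n < 2^Suc j" shows "\<not> tperiodic (K j) n"
proof
  assume "tperiodic (K j) n"
  then have pn: "per (tseq (K j)) n" by (simp add: tperiodic_def per_def)
  have pN: "per (tseq (K j)) (2^Suc j)" using tseq_period[of j] by (simp add: per_def)
  define g where "g = gcd n (2^Suc j)"
  have pg: "per (tseq (K j)) g" unfolding g_def by (rule per_gcd[OF pn pN])
  have "g dvd 2^Suc j" unfolding g_def by simp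
  then obtain a where a: "a \<le> Suc j" "g = 2^a" using divides_primepow_nat[OF two_is_prime_nat] by blast
  have "g \<le> n" unfolding g_def using assms by (simp add: gcd_le1_nat)
  then have "a \<noteq> Suc j" using a assms by auto
  then have "a \<le> j" using a by simp
  then have "2^j = 2^(j - a) * g" using a by (simp add: power_add[symmetric])
  then have "per (tseq (K j)) (2^j)" using per_mult[OF pg, of "2^(j-a)"] by simp
  then have pj: "\<forall>k\<ge>1. tseq (K j) (k + 2^j) = tseq (K j) k" unfolding per_def .
  have "tseq (K j) (1 + 2^j) = tseq (K j) 1" using pj[rule_format, of 1] by simp
  moreover have "tseq (K j) (1 + 2^j) = (1 + tseq (K j) 1) mod 2" by (rule tseq_anti)
  moreover have "tseq (K j) 1 = 0 \<or> tseq (K j) 1 = 1" using tseq_le1[of "K j" 1] by linarith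
  ultimately show False by auto
qed

lemma least_K: "(LEAST n. tperiodic (K j) n) = 2^Suc j"
proof (rule Least_equality)
  show "tperiodic (K j) (2^Suc j)" by (rule tperiodic_K)
next
  fix m assume m: "tperiodic (K j) m"
  show "2^Suc j \<le> m"
  proof (rule ccontr)
    assume "\<not> 2^Suc j \<le> m"
    then have "m < 2^Suc j" by simp
    moreover have "0 < m" using m by (simp add: tperiodic_def)
    ultimately show False using not_tperiodic_K m by blast
  qed
qed

lemma zeta_K: "1 / zeta (K j) z = (1 - z) * (\<Prod>n\<le>j. 1 - z ^ (2 ^ n))"
proof -
  have ex: "\<exists>n. tperiodic (K j) n" using tperiodic_K by blast
  define N :: nat where "N = 2^Suc j"
  have "(\<Sum>k<N. eps (K j) k * z^k) = (\<Sum>k<Suc (N - 1). eps (K j) k * z^k)"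
    unfolding N_def by simp
  also have "\<dots> = 1 + (\<Sum>k=1..N-1. eps (K j) k * z^k)"
    by (subst sum.lessThan_Suc_shift) (simp add: eps_def sum.atLeast1_atMost_eq)
  finally have "1 + (\<Sum>k=1..N-1. eps (K j) k * z^k) = (\<Prod>n\<le>j. 1 - z ^ (2 ^ n))"
    using poly_K[of j z] unfolding N_def by simp
  then show ?thesis unfolding zeta_def using ex least_K[of j] by (simp add: Let_def N_def)
qed


lemma K_stable: assumes "1 \<le> k" "k < 2^Suc j" shows "j \<le> m \<Longrightarrow> K m k = K j k"
proof (induction m rule: dec_induct)
  case base then show ?case by simp
next
  case (step m)
  have "(2::nat)^Suc j \<le> 2^Suc m" using step.hyps by (intro power_increasing) auto
  then have "k < 2^Suc m" using assms(2) by linarith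
  then have "K (Suc m) k = K m k" using assms(1) by (intro K_Suc) auto
  then show ?case using step by simp
qed

lemma Kinf_eq: assumes "1 \<le> k" "k < 2^Suc j" shows "Kinf k = K j k"
proof -
  have ev: "eventually (\<lambda>m. K m k = K j k) sequentially"
    unfolding eventually_sequentially using K_stable[OF assms] by blast
  show ?thesis unfolding Kinf_def
  proof (rule the_equality)
    show "eventually (\<lambda>m. K m k = K j k) sequentially" by (rule ev)
  next
    fix b assume h: "eventually (\<lambda>m. K m k = b) sequentially"
    have "eventually (\<lambda>m. K m k = b \<and> K m k = K j k) sequentially" using h ev by (rule eventually_conj)
    then obtain N where "\<forall>m\<ge>N. K m k = b \<and> K m k = K j k" unfolding eventually_sequentially by blast
    then have "K N k = b \<and> K N k = K j k" by blast
    then show "b = K j k" by simp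
  qed
qed

lemma Kinf_01: assumes "1 \<le> k" shows "Kinf k \<le> 1"
proof -
  have "k < 2^k" by (rule less_exp)
  also have "(2::nat)^k \<le> 2^Suc k" by (rule power_increasing) auto
  finally have "Kinf k = K k k" using assms by (intro Kinf_eq) auto
  then show ?thesis using K_01[of k k] by auto
qed

lemma tseq_Kinf: "k < 2^Suc j \<Longrightarrow> tseq Kinf k = tseq (K j) k"
  unfolding tseq_def by (intro arg_cong[where f="\<lambda>x. x mod 2"] sum.cong) (auto intro!: Kinf_eq)

lemma Kinf_odd: "Kinf (2*i+1) = 1"
proof -
  have i: "i < 2^i" by (rule less_exp)
  have "(2::nat)^Suc (Suc i) = 4 * 2^i" by simp
  then have "2*i+1 < 2^Suc (Suc i)" using i by linarith
  then have "Kinf (2*i+1) = K (Suc i) (2*i+1)" by (intro Kinf_eq) auto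
  also have "\<dots> = feig (kblock i) ! (2*i)" unfolding K_def using i by (simp add: kblock_Suc)
  also have "\<dots> = 1" using i by (simp add: feig_nth_even)
  finally show ?thesis .
qed

lemma Kinf_even: "Kinf (2*i+2) = 1 - Kinf (i+1)"
proof -
  have i: "i < 2^i" by (rule less_exp)
  have "(2::nat)^Suc (Suc i) = 4 * 2^i" by simp
  then have "2*i+2 < 2^Suc (Suc i)" using i by linarith
  then have a: "Kinf (2*i+2) = K (Suc i) (2*i+2)" by (intro Kinf_eq) auto
  have "2*i+1 < 2*2^i" using i by linarith
  then have "K (Suc i) (2*i+2) = feig (kblock i) ! (2*i+1)" unfolding K_def by (simp add: kblock_Suc)
  also have "\<dots> = (if kblock i ! i = 1 then 0 else 1)" using i feig_nth_odd[of i "kblock i"] by simp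
  finally have b: "Kinf (2*i+2) = (if kblock i ! i = 1 then 0 else 1)" using a by simp
  have "(2::nat)^Suc i = 2 * 2^i" by simp
  then have "i + 1 < 2^Suc i" using i by linarith
  then have c: "Kinf (i+1) = K i (i+1)" by (intro Kinf_eq) auto
  have d: "K i (i+1) = kblock i ! i" unfolding K_def using i by simp
  have "K i (i+1) = 0 \<or> K i (i+1) = 1" using K_01[of i "i+1"] by simp
  then show ?thesis using b c d by auto
qed

lemma s_from_t: assumes "s k \<le> 1" "1 \<le> k" shows "s k = (tseq s k + tseq s (k-1)) mod 2"
proof -
  obtain k' where k: "k = Suc k'" using assms by (cases k) auto
  have eq: "tseq s (Suc k') = (tseq s k' + s (Suc k')) mod 2" by (rule tseq_Suc)
  have h1: "s (Suc k') = 0 \<or> s (Suc k') = 1" using assms unfolding k by auto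
  have h2: "tseq s k' = 0 \<or> tseq s k' = 1" using tseq_le1[of s k'] by linarith
  from h1 h2 show ?thesis unfolding k by (elim disjE) (simp_all add: eq)
qed

lemma Kinf_aper: "0 < n \<Longrightarrow> \<not> (\<forall>k\<ge>2. Kinf (k+n) = Kinf k)"
proof (induction n rule: less_induct)
  case (less n)
  show ?case
  proof
    assume p: "\<forall>k\<ge>2. Kinf (k+n) = Kinf k"
    show False
    proof (cases "even n")
      case True
      then obtain m where m: "n = 2*m" by blast
      have "0 < m" "m < n" using less.prems m by auto
      moreover have "\<forall>k\<ge>2. Kinf (k+m) = Kinf k"
      proof (intro allI impI)
        fix k :: nat assume k: "2 \<le> k"
        have "Kinf (2*(k-1+m)+2) = Kinf (2*(k-1)+2)" using p[rule_format, of "2*(k-1)+2"] m by (simp add: algebra_simps)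
        then have "1 - Kinf (k + m) = 1 - Kinf k" using Kinf_even[of "k-1+m"] Kinf_even[of "k-1"] k by simp
        then show "Kinf (k+m) = Kinf k" using Kinf_01[of "k+m"] Kinf_01[of k] k by linarith
      qed
      ultimately show False using less.IH by blast
    next
      case False
      have ev: "Kinf e = 1" if "even e" "e \<ge> n + 2" for e
      proof -
        have "odd (e - n)" using that False by (simp add: even_diff_nat)
        then obtain i where i: "e - n = 2*i+1" by (rule oddE)
        have "Kinf e = Kinf ((e - n) + n)" using that by simp
        also have "\<dots> = Kinf (e - n)" using p[rule_format, of "e-n"] that by simp
        finally show ?thesis using i Kinf_odd by simp
      qed
      have "Kinf (2*(2*n+1)+2) = 1 - Kinf (2*n+2)" using Kinf_even[of "2*n+1"] by simp
      also have "Kinf (2*n+2) = 1" using ev[of "2*n+2"] by simp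
      finally show False using ev[of "2*(2*n+1)+2"] by simp
    qed
  qed
qed

lemma Kinf_not_tperiodic: "\<not> tperiodic Kinf n"
proof
  assume "tperiodic Kinf n"
  then have n: "n > 0" and t: "\<forall>k\<ge>1. tseq Kinf (k + n) = tseq Kinf k" by (auto simp: tperiodic_def)
  have "\<forall>k\<ge>2. Kinf (k+n) = Kinf k"
  proof (intro allI impI)
    fix k :: nat assume k: "2 \<le> k"
    have "Kinf (k+n) = (tseq Kinf (k+n) + tseq Kinf (k+n-1)) mod 2"
      by (rule s_from_t) (use Kinf_01 k in auto)
    also have "tseq Kinf (k+n-1) = tseq Kinf ((k - 1) + n)" using k by simp
    also have "\<dots> = tseq Kinf (k - 1)" using t[rule_format, of "k-1"] k by simp
    also have "tseq Kinf (k+n) = tseq Kinf k" using t k by simp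
    also have "(tseq Kinf k + tseq Kinf (k - 1)) mod 2 = Kinf k"
      by (rule s_from_t[symmetric]) (use Kinf_01 k in auto)
    finally show "Kinf (k+n) = Kinf k" .
  qed
  then show False using Kinf_aper[OF n] by blast
qed


lemma pow_eq1: "(x::real) \<ge> 0 \<Longrightarrow> x ^ m = 1 \<Longrightarrow> 0 < m \<Longrightarrow> x = 1"
  using real_root_one real_root_pos_unique by blast

lemma zeros_on_circle: "(1 - z) * (\<Prod>n\<le>j. 1 - z ^ (2 ^ n)) = 0 \<Longrightarrow> cmod z = 1"
proof -
  assume "(1 - z) * (\<Prod>n\<le>j. 1 - z ^ (2 ^ n)) = 0"
  then obtain m :: nat where m: "m > 0" "z ^ m = 1"
    by (auto simp: prod_zero_iff) (metis power_one_right zero_less_one, metis pos2 zero_less_power)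
  then have "cmod z ^ m = 1" by (metis norm_one norm_power)
  then show ?thesis using m pow_eq1[of "cmod z" m] by simp
qed

lemma cmod_eps: "cmod (eps s k) = 1"
  using tseq_le1[of s k] by (cases "tseq s k") (auto simp: eps_def)

lemma analytic_part:
  assumes z: "cmod z < 1"
  shows "(\<lambda>j. zeta (K j) z) \<longlonglongrightarrow> zeta Kinf z \<and> 1 / zeta Kinf z = (1 - z) * (\<Prod>n. 1 - z ^ (2 ^ n))"
proof -
  define E where "E k = eps Kinf k * z^k" for k
  have sumE: "summable E"
  proof (rule summable_comparison_test[of _ "\<lambda>k. cmod z ^ k"])
    show "\<exists>N. \<forall>n\<ge>N. norm (E n) \<le> cmod z ^ n" by (auto simp: E_def norm_mult norm_power cmod_eps)
    show "summable (\<lambda>k. cmod z ^ k)" using z by (intro summable_geometric) simp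
  qed
  define S where "S = suminf E"
  have part: "(\<Sum>k<2^Suc j. E k) = (\<Prod>n\<le>j. 1 - z^(2^n))" for j
  proof -
    have "(\<Sum>k<2^Suc j. E k) = (\<Sum>k<2^Suc j. eps (K j) k * z^k)"
      unfolding E_def by (intro sum.cong) (auto simp: eps_def tseq_Kinf)
    then show ?thesis using poly_K by simp
  qed
  have "(\<lambda>n. \<Sum>k<n. E k) \<longlonglongrightarrow> S" unfolding S_def using sumE by (simp add: summable_LIMSEQ)
  moreover have "strict_mono (\<lambda>j::nat. (2::nat)^Suc j)" by (intro strict_monoI) simp
  ultimately have "(\<lambda>j. \<Sum>k<2^Suc j. E k) \<longlonglongrightarrow> S" by (rule LIMSEQ_subseq_LIMSEQ[unfolded o_def])
  then have limP: "(\<lambda>j. \<Prod>n\<le>j. 1 - z^(2^n)) \<longlonglongrightarrow> S" using part by simp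
  have "summable (\<lambda>n. norm ((1 - z^(2^n)) - 1))"
  proof (rule summable_comparison_test[of _ "\<lambda>k. cmod z ^ k"])
    show "\<exists>N. \<forall>n\<ge>N. norm (norm ((1 - z^(2^n)) - 1)) \<le> cmod z ^ n"
      using z by (auto simp: norm_power intro!: power_decreasing less_imp_le[OF less_exp])
    show "summable (\<lambda>k. cmod z ^ k)" using z by (intro summable_geometric) simp
  qed
  then have cp: "convergent_prod (\<lambda>n. 1 - z^(2^n))"
    by (intro abs_convergent_prod_imp_convergent_prod summable_imp_abs_convergent_prod)
  have nz: "1 - z^(2^n) \<noteq> 0" for n
  proof
    assume "1 - z^(2^n) = 0"
    then have "cmod z ^ (2^n) = 1" by (metis eq_iff_diff_eq_0 norm_one norm_power)
    then show False using z pow_eq1[of "cmod z" "2^n"] by simp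
  qed
  have SP: "S = (\<Prod>n. 1 - z ^ (2 ^ n))"
    using LIMSEQ_unique[OF limP convergent_prod_LIMSEQ[OF cp]] .
  have S0: "S \<noteq> 0" unfolding SP by (rule prodinf_nonzero[OF cp nz])
  have z1: "1 - z \<noteq> 0" using z by auto
  have "1 + (\<Sum>k. eps Kinf (Suc k) * z ^ Suc k) = S"
    using suminf_split_head[OF sumE] unfolding S_def E_def by (simp add: eps_def)
  then have zi: "zeta Kinf z = 1 / ((1 - z) * S)"
  proof -
    have "\<not> (\<exists>n. tperiodic Kinf n)" using Kinf_not_tperiodic by blast
    then have "zeta Kinf z = 1 / ((1 - z) * (1 + (\<Sum>k. eps Kinf (Suc k) * z ^ Suc k)))"
      unfolding zeta_def by (simp only: if_False)
    then show ?thesis using \<open>1 + (\<Sum>k. eps Kinf (Suc k) * z ^ Suc k) = S\<close> by simp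
  qed
  have zK: "zeta (K j) z = 1 / ((1 - z) * (\<Prod>n\<le>j. 1 - z^(2^n)))" for j
    using zeta_K[of j z] by (metis divide_divide_eq_right div_by_1 mult_1)
  have "(\<lambda>j. 1 / ((1 - z) * (\<Prod>n\<le>j. 1 - z^(2^n)))) \<longlonglongrightarrow> 1 / ((1 - z) * S)"
    using S0 z1 by (intro tendsto_intros limP) simp
  then show ?thesis unfolding zK zi SP by simp
qed


theorem mainTheorem8:
  shows "(\<forall>j\<ge>1.
            (\<forall>z. 1 / zeta (K j) z = (1 - z) * (\<Prod>n\<le>j. 1 - z ^ (2 ^ n))) \<and>
            (\<forall>z. (1 - z) * (\<Prod>n\<le>j. 1 - z ^ (2 ^ n)) = 0 \<longrightarrow> cmod z = 1))
       \<and> (\<forall>z. cmod z < 1 \<longrightarrow> (\<lambda>j. zeta (K j) z) \<longlonglongrightarrow> zeta Kinf z)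
       \<and> (\<forall>z. cmod z < 1 \<longrightarrow> 1 / zeta Kinf z = (1 - z) * (\<Prod>n. 1 - z ^ (2 ^ n)))"
  using zeta_K zeros_on_circle analytic_part by blast

end
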